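(* Let $p>3$ be a prime. Then $$\sum_{k=0}^{[p/4]}\binom{4k}{2k}\frac1{18^k}\equiv2\Big(\frac6p\Big)-\Big(\frac3p\Big)\pmod p.$$
   Context: $[x]$ is the greatest integer $\le x$; $(\frac{\cdot}{p})$ is the Legendre symbol. *)

theory Defs
  imports "HOL-Number_Theory.Number_Theory"
begin

definition rat_cong :: "rat \<Rightarrow> rat \<Rightarrow> int \<Rightarrow> bool" where
  "rat_cong x y m \<longleftrightarrow>
     (\<exists>a b::int. b \<noteq> 0 \<and> coprime b m \<and> m dvd a \<and> x - y = of_int a / of_int b)"

end

theory Submission imports Defs begin

definition PP :: "int \<Rightarrow> int \<Rightarrow> nat \<Rightarrow> int" where
  "PP x y m = (\<Sum>k<Suc m. int (m choose (2*k)) * x^(m-2*k) * y^k)"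
definition QQ :: "int \<Rightarrow> int \<Rightarrow> nat \<Rightarrow> int" where
  "QQ x y m = (\<Sum>k<Suc m. int (m choose (2*k+1)) * x^(m-2*k-1) * y^k)"

lemma PQ_real:
  fixes s :: real
  assumes s: "s^2 = of_int y"
  shows "(of_int x + s)^m = of_int (PP x y m) + of_int (QQ x y m) * s"
proof -
  define f where "f = (\<lambda>k. of_nat (m choose k) * s^k * (of_int x::real)^(m-k))"
  have "(of_int x + s)^m = (\<Sum>k\<le>m. f k)"
    unfolding f_def by (subst add.commute) (rule binomial_ring)
  also have "\<dots> = (\<Sum>k<2*Suc m. f k)"
  proof (rule sum.mono_neutral_left)
    show "\<forall>i\<in>{..<2 * Suc m} - {..m}. f i = 0" by (auto simp: f_def)
  qed auto
  also have "\<dots> = (\<Sum>k<2*Suc m. if even k then f k else f k)" by simp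
  also have "\<dots> = (\<Sum>i<Suc m. f (2*i)) + (\<Sum>i<Suc m. f (2*i+1))"
    by (rule sum_split_even_odd)
  also have "(\<Sum>i<Suc m. f (2*i)) = of_int (PP x y m)"
    unfolding PP_def f_def of_int_sum
    by (rule sum.cong) (auto simp: power_mult s)
  also have "(\<Sum>i<Suc m. f (2*i+1)) = of_int (QQ x y m) * s"
    unfolding QQ_def f_def of_int_sum sum_distrib_right
    by (rule sum.cong) (auto simp: power_mult s)
  finally show ?thesis .
qed

lemma coprime_small:
  assumes "prime p" "0 < k" "k < p"
  shows "coprime (int k) (int p)"
proof -
  have "\<not> int p dvd int k" using assms by (auto dest: zdvd_imp_le)
  then have "coprime (int p) (int k)" using assms(1) by (intro prime_imp_coprime) auto
  then show ?thesis by (simp add: coprime_commute)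
qed

lemma aux_cancel:
  assumes "(a::nat)*X = c*Y" "a*Y = d*Z" "c = 2*a" "a>0" shows "a*X = 2*d*Z"
proof -
  have "a*(a*X) = a*(c*Y)" using assms(1) by simp
  also have "\<dots> = c*(a*Y)" by (simp only: mult.left_commute)
  also have "\<dots> = c*(d*Z)" using assms(2) by simp
  also have "\<dots> = a*(2*d*Z)" using assms(3) by simp
  finally show ?thesis using assms(4) by simp
qed

lemma cb:
  assumes "prime p" "p = 2*n+1"
  shows "m \<le> n \<Longrightarrow> [int (2*m choose m) = (-4)^m * int (n choose m)] (mod int p)"
proof (induction m)
  case 0 then show ?case by simp
next
  case (Suc m)
  have a: "(m+1) * (2*m+2 choose (m+1)) = 2*(2*m+1)*(2*m choose m)"
  proof -
    have 1: "(m+1) * (2*m+2 choose (m+1)) = (2*m+2) * (2*m+1 choose m)"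
      using Suc_times_binomial[of m "2*m+1"] by simp
    have 2: "(2*m+1 choose m) = (2*m+1 choose (m+1))"
      by (subst binomial_symmetric) auto
    have 3: "(m+1) * (2*m+1 choose (m+1)) = (2*m+1) * (2*m choose m)"
      using Suc_times_binomial[of m "2*m"] by simp
    show ?thesis by (rule aux_cancel[OF 1[unfolded 2] 3]) simp_all
  qed
  have b: "(m+1) * (n choose (m+1)) = (n - m) * (n choose m)"
    using binomial_absorption[of m n] binomial_absorb_comp[of n m] by simp
  have IH: "[int (2*m choose m) = (-4)^m * int (n choose m)] (mod int p)"
    using Suc by simp
  have F1: "[int (m+1) * int (2*(m+1) choose (m+1)) = 2*(2*int m+1) * int (2*m choose m)] (mod int p)"
  proof -
    have a': "(m+1) * (2*(m+1) choose (m+1)) = 2*(2*m+1)*(2*m choose m)"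
      using a by (simp only: distrib_left mult_1_right)
    have "int ((m+1) * (2*(m+1) choose (m+1))) = int (2*(2*m+1)*(2*m choose m))" using a' by (rule arg_cong)
    then have E: "int (m+1) * int (2*(m+1) choose (m+1)) = 2*(2*int m+1) * int (2*m choose m)"
      by (simp only: of_nat_mult of_nat_add of_nat_numeral of_nat_1)
    show ?thesis unfolding E by (rule cong_refl)
  qed
  have F2: "[2*(2*int m+1) * int (2*m choose m) = 2*(2*int m+1) * ((-4)^m * int (n choose m))] (mod int p)"
    by (rule cong_mult[OF cong_refl IH])
  have F3: "[2*(2*int m+1) = -4 * (int n - int m)] (mod int p)"
  proof -
    have "2*(2*int m+1) - (-4 * (int n - int m)) = 2 * int p" using assms by simp
    then show ?thesis by (metis cong_iff_dvd_diff dvd_triv_right)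
  qed
  have "[int (m+1) * int (2*(m+1) choose (m+1)) = (-4 * (int n - int m)) * ((-4)^m * int (n choose m))] (mod int p)"
    by (rule cong_trans[OF F1 cong_trans[OF F2 cong_mult[OF F3 cong_refl]]])
  moreover have "(-4 * (int n - int m)) * ((-4)^m * int (n choose m)) = int (m+1) * ((-4)^(m+1) * int (n choose (m+1)))"
  proof -
    have "int ((m+1) * (n choose (m+1))) = int ((n - m) * (n choose m))" using b by (rule arg_cong)
    then have H: "int (m+1) * int (n choose (m+1)) = (int n - int m) * int (n choose m)"
      using Suc.prems by (simp only: of_nat_mult of_nat_diff)
    have "int (m+1) * ((-4)^(m+1) * int (n choose (m+1))) = (-4)^(m+1) * (int (m+1) * int (n choose (m+1)))"
      by (simp only: mult.left_commute)
    also have "\<dots> = (-4)^(m+1) * ((int n - int m) * int (n choose m))" by (simp only: H)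
    also have "\<dots> = (-4 * (int n - int m)) * ((-4)^m * int (n choose m))" by (simp add: algebra_simps)
    finally show ?thesis by simp
  qed
  ultimately have c: "[int (m+1) * int (2*(m+1) choose (m+1)) = int (m+1) * ((-4)^(m+1) * int (n choose (m+1)))] (mod int p)"
    by simp
  have cop: "coprime (int (m+1)) (int p)"
    using coprime_small[OF assms(1), of "m+1"] Suc.prems assms(2) by simp
  have "[int (2*(m+1) choose (m+1)) = (-4)^(m+1) * int (n choose (m+1))] (mod int p)"
    using c cong_mult_lcancel[OF cop] by blast
  then show ?case by simp
qed

lemma PQ_real_minus:
  fixes s :: real
  assumes s: "s^2 = of_int y"
  shows "(of_int x - s)^m = of_int (PP x y m) - of_int (QQ x y m) * s"
  using PQ_real[of "-s" y x m] s by simp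

lemma PQ_rec:
  assumes "y > 0"
  shows "PP x y (Suc m) = x * PP x y m + y * QQ x y m"
    and "QQ x y (Suc m) = PP x y m + x * QQ x y m"
proof -
  define s where "s = sqrt (of_int y)"
  have s2: "s^2 = of_int y" using assms by (simp add: s_def)
  have s0: "s \<noteq> 0" using assms by (simp add: s_def)
  have e1: "(of_int x + s)^(Suc m) = (of_int x + s) * (of_int (PP x y m) + of_int (QQ x y m) * s)"
    using PQ_real[OF s2, of x m] by simp
  have e2: "(of_int x - s)^(Suc m) = (of_int x - s) * (of_int (PP x y m) - of_int (QQ x y m) * s)"
    using PQ_real_minus[OF s2, of x m] by simp
  have ss: "s * s = of_int y" using s2 by (simp add: power2_eq_square)
  have r1: "(of_int x + s) * (of_int (PP x y m) + of_int (QQ x y m) * s)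
     = of_int (x * PP x y m + y * QQ x y m) + of_int (PP x y m + x * QQ x y m) * s"
  proof -
    have "(of_int x + s) * (of_int (PP x y m) + of_int (QQ x y m) * s)
      = of_int x * of_int (PP x y m) + of_int (QQ x y m) * (s * s) + (of_int (PP x y m) + of_int x * of_int (QQ x y m)) * s"
      by (simp add: algebra_simps)
    then show ?thesis by (simp add: ss)
  qed
  have r2: "(of_int x - s) * (of_int (PP x y m) - of_int (QQ x y m) * s)
     = of_int (x * PP x y m + y * QQ x y m) - of_int (PP x y m + x * QQ x y m) * s"
  proof -
    have "(of_int x - s) * (of_int (PP x y m) - of_int (QQ x y m) * s)
      = of_int x * of_int (PP x y m) + of_int (QQ x y m) * (s * s) - (of_int (PP x y m) + of_int x * of_int (QQ x y m)) * s"
      by (simp add: algebra_simps)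
    then show ?thesis by (simp add: ss)
  qed
  have A: "of_int (PP x y (Suc m)) + of_int (QQ x y (Suc m)) * s
     = of_int (x * PP x y m + y * QQ x y m) + of_int (PP x y m + x * QQ x y m) * s"
    using e1 r1 PQ_real[OF s2, of x "Suc m"] by simp
  have B: "of_int (PP x y (Suc m)) - of_int (QQ x y (Suc m)) * s
     = of_int (x * PP x y m + y * QQ x y m) - of_int (PP x y m + x * QQ x y m) * s"
    using e2 r2 PQ_real_minus[OF s2, of x "Suc m"] by simp
  have "(real_of_int (PP x y (Suc m))) = of_int (x * PP x y m + y * QQ x y m)"
    using A B by linarith
  then show "PP x y (Suc m) = x * PP x y m + y * QQ x y m" by (simp only: of_int_eq_iff)
  have "real_of_int (QQ x y (Suc m)) * s = of_int (PP x y m + x * QQ x y m) * s"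
    using A B by linarith
  then have "real_of_int (QQ x y (Suc m)) = of_int (PP x y m + x * QQ x y m)"
    using s0 mult_right_cancel by blast
  then show "QQ x y (Suc m) = PP x y m + x * QQ x y m" using of_int_eq_iff by blast
qed

lemma PP_double: "PP 1 2 (2*n) = PP 3 8 n"
proof -
  define s where "s = sqrt (2::real)"
  have s2: "s^2 = of_int 2" by (simp add: s_def)
  have t2: "(2*s)^2 = of_int 8" using s2 by (simp add: power_mult_distrib)
  have sq: "(1 + s)^2 = 3 + 2*s" "(1 - s)^2 = 3 - 2*s" using s2 by (simp_all add: power2_eq_square algebra_simps)
  have "(of_int 1 + s)^(2*n) + (of_int 1 - s)^(2*n) = 2 * of_int (PP 1 2 (2*n))"
    using PQ_real[OF s2, of 1 "2*n"] PQ_real_minus[OF s2, of 1 "2*n"] by simp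
  moreover have "(of_int 1 + s)^(2*n) + (of_int 1 - s)^(2*n) = (of_int 3 + 2*s)^n + (of_int 3 - 2*s)^n"
    using sq by (simp add: power_mult)
  moreover have "(of_int 3 + 2*s)^n + (of_int 3 - 2*s)^n = 2 * of_int (PP 3 8 n)"
    using PQ_real[OF t2, of 3 n] PQ_real_minus[OF t2, of 3 n] by simp
  ultimately show ?thesis by simp
qed

lemma PP_p:
  assumes "prime p" "odd p"
  shows "[PP 1 2 p = 1] (mod int p)"
proof -
  have "PP 1 2 p = (\<Sum>k<Suc p. int (p choose (2*k)) * 2^k)" by (simp add: PP_def)
  also have "\<dots> = 1 + (\<Sum>k<p. int (p choose (2*Suc k)) * 2^Suc k)"
    by (subst sum.lessThan_Suc_shift) simp
  finally have e: "PP 1 2 p = 1 + (\<Sum>k<p. int (p choose (2*Suc k)) * 2^Suc k)" .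
  have "int p dvd (\<Sum>k<p. int (p choose (2*Suc k)) * 2^Suc k)"
  proof (rule dvd_sum)
    fix k assume "k \<in> {..<p}"
    show "int p dvd int (p choose (2*Suc k)) * 2^Suc k"
    proof (cases "2*Suc k < p")
      case True
      then have "p dvd (p choose (2*Suc k))"
        using assms(1) by (intro dvd_choose_prime) auto
      then show ?thesis by (simp add: int_dvd_int_iff)
    next
      case False
      then have "2*Suc k > p" using assms(2) by presburger
      then show ?thesis by (simp add: binomial_eq_0)
    qed
  qed
  then show ?thesis using e by (simp add: cong_iff_dvd_diff)
qed

lemma QQ_p:
  assumes "prime p" "p = 2*n+1"
  shows "[QQ 1 2 p = 2^n] (mod int p)"
proof -
  have n: "n \<in> {..<Suc p}" using assms by simp
  have "QQ 1 2 p = (\<Sum>k<Suc p. int (p choose (2*k+1)) * 2^k)" by (simp add: QQ_def)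
  also have "\<dots> = int (p choose (2*n+1)) * 2^n + (\<Sum>k\<in>{..<Suc p} - {n}. int (p choose (2*k+1)) * 2^k)"
    by (rule sum.remove[OF _ n]) simp
  finally have e: "QQ 1 2 p = 2^n + (\<Sum>k\<in>{..<Suc p} - {n}. int (p choose (2*k+1)) * 2^k)"
    using assms(2) by simp
  have "int p dvd (\<Sum>k\<in>{..<Suc p} - {n}. int (p choose (2*k+1)) * 2^k)"
  proof (rule dvd_sum)
    fix k assume k: "k \<in> {..<Suc p} - {n}"
    show "int p dvd int (p choose (2*k+1)) * 2^k"
    proof (cases "2*k+1 < p")
      case True
      then have "p dvd (p choose (2*k+1))"
        using assms(1) by (intro dvd_choose_prime) auto
      then show ?thesis by (simp add: int_dvd_int_iff)
    next
      case False
      then have "2*k+1 > p" using assms(2) k by auto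
      then show ?thesis by (simp add: binomial_eq_0)
    qed
  qed
  then show ?thesis using e by (simp add: cong_iff_dvd_diff)
qed


lemma exp_id: "(16::int)^k * 18^j * 3^r = 2^(k+j) * 8^k * 3^(2*j+r)"
proof -
  have a: "(16::int)^k = 2^k*8^k" by (simp add: power_mult_distrib[symmetric])
  have b: "(18::int)^j = 2^j * 9^j" by (simp add: power_mult_distrib[symmetric])
  have c: "(3::int)^(2*j+r) = 9^j * 3^r" by (simp add: power_add power_mult)
  show ?thesis unfolding a b c by (simp add: power_add algebra_simps)
qed

lemma coprime_prime_gt3:
  assumes "prime p" "p > 3" "a \<in> {2,3::int}"
  shows "coprime a (int p)"
proof -
  have pr: "prime (int p)" using assms by simp
  have "\<not> int p dvd a" using assms by (auto dest: zdvd_imp_le)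
  then show ?thesis using prime_imp_coprime[OF pr] by (simp add: coprime_commute)
qed

lemma Legendre_pm1:
  assumes "prime p" "p > 3" "a \<in> {2,3::int}"
  shows "Legendre a (int p) \<in> {1,-1}"
proof -
  have "\<not> [a = 0] (mod int p)" using assms by (auto simp: cong_0_iff dest: zdvd_imp_le)
  then show ?thesis by (auto simp: Legendre_def)
qed

theorem corollary2p11:
  fixes p :: nat
  assumes "prime p" and "p > 3"
  shows "rat_cong (\<Sum>k=0..p div 4. of_nat ((4*k) choose (2*k)) / 18^k)
                  (of_int (2 * Legendre 6 (int p) - Legendre 3 (int p)))
                  (int p)"
proof -
  define n where "n = (p-1) div 2"
  define K where "K = p div 4"
  define r where "r = n - 2*K"
  define q where "q = int p"
  define L2 where "L2 = Legendre 2 q"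
  define L3 where "L3 = Legendre 3 q"
  define L6 where "L6 = Legendre 6 q"
  define T where "T = 2 * L6 - L3"
  have odd: "odd p" using assms prime_odd_nat by auto
  have pn: "p = 2*n+1" using odd unfolding n_def by presburger
  have Kn: "n = 2*K + r" unfolding r_def K_def using pn by presburger
  have r1: "r \<le> 1" unfolding r_def K_def using pn by presburger
  define N where "N = (\<Sum>k=0..K. int ((4*k) choose (2*k)) * 18^(K-k))"
  have S_eq: "(\<Sum>k=0..K. of_nat ((4*k) choose (2*k)) / 18^k :: rat) = of_int N / 18^K"
    unfolding N_def of_int_sum sum_divide_distrib
  proof (rule sum.cong)
    fix k assume "k \<in> {0..K}"
    then have "k \<le> K" by simp
    then have "(18::rat)^K = 18^k * 18^(K-k)" by (simp add: power_add[symmetric])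
    then show "of_nat ((4*k) choose (2*k)) / 18^k = (of_int (int ((4*k) choose (2*k)) * 18^(K-k)) :: rat) / 18^K"
      by (simp add: field_simps)
  qed simp
  have PPsum: "PP 3 8 n = (\<Sum>k=0..K. int (n choose (2*k)) * 3^(n-2*k) * 8^k)"
  proof -
    have "PP 3 8 n = (\<Sum>k<Suc n. int (n choose (2*k)) * 3^(n-2*k) * 8^k)" by (simp add: PP_def)
    also have "\<dots> = (\<Sum>k=0..K. int (n choose (2*k)) * 3^(n-2*k) * 8^k)"
      by (rule sum.mono_neutral_right) (use Kn r1 in \<open>auto simp: binomial_eq_0\<close>)
    finally show ?thesis .
  qed
  have c1: "[N * 3^r = 2^K * PP 3 8 n] (mod q)"
  proof -
    have "N * 3^r = (\<Sum>k=0..K. int ((4*k) choose (2*k)) * 18^(K-k) * 3^r)"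
      unfolding N_def by (simp add: sum_distrib_right)
    moreover have "2^K * PP 3 8 n = (\<Sum>k=0..K. 2^K * (int (n choose (2*k)) * 3^(n-2*k) * 8^k))"
      unfolding PPsum by (simp add: sum_distrib_left)
    moreover have "[(\<Sum>k=0..K. int ((4*k) choose (2*k)) * 18^(K-k) * 3^r)
        = (\<Sum>k=0..K. 2^K * (int (n choose (2*k)) * 3^(n-2*k) * 8^k))] (mod q)"
    proof (rule cong_sum)
      fix k assume "k \<in> {0..K}"
      then have kK: "k \<le> K" by simp
      have "[int (2*(2*k) choose (2*k)) = (-4)^(2*k) * int (n choose (2*k))] (mod int p)"
        by (rule cb[OF assms(1) pn]) (use kK Kn in simp)
      then have "[int ((4*k) choose (2*k)) = 16^k * int (n choose (2*k))] (mod q)"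
        unfolding q_def by (simp add: power_mult)
      then have A: "[int ((4*k) choose (2*k)) * (18^(K-k) * 3^r) = 16^k * int (n choose (2*k)) * (18^(K-k) * 3^r)] (mod q)"
        by (rule cong_mult) simp
      have E: "16^k * int (n choose (2*k)) * (18^(K-k) * 3^r) = 2^K * (int (n choose (2*k)) * 3^(n-2*k) * 8^k)"
      proof -
        have e: "(16::int)^k * 18^(K-k) * 3^r = 2^(k+(K-k)) * 8^k * 3^(2*(K-k)+r)" by (rule exp_id)
        have "k + (K-k) = K" "2*(K-k)+r = n-2*k" using kK Kn by auto
        then show ?thesis using e by (simp add: algebra_simps)
      qed
      have A2: "[int ((4*k) choose (2*k)) * (18^(K-k) * 3^r) = 2^K * (int (n choose (2*k)) * 3^(n-2*k) * 8^k)] (mod q)"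
        using A unfolding E .
      then show "[int ((4*k) choose (2*k)) * 18^(K-k) * 3^r = 2^K * (int (n choose (2*k)) * 3^(n-2*k) * 8^k)] (mod q)"
        by (simp only: mult.assoc)
    qed
    ultimately show ?thesis by simp
  qed
  have PPn: "PP 3 8 n = 2 * QQ 1 2 p - PP 1 2 p"
    using PQ_rec[of 2 1 "2*n"] PP_double[of n] pn by simp
  have c2: "[PP 3 8 n = 2 * 2^n - 1] (mod q)"
    unfolding PPn q_def
    by (intro cong_diff cong_mult cong_refl QQ_p[OF assms(1) pn] PP_p[OF assms(1) odd])
  have e2: "[L2 = 2^n] (mod q)" "[L3 = 3^n] (mod q)" "[L6 = 6^n] (mod q)"
    unfolding L2_def L3_def L6_def q_def n_def using euler_criterion[OF assms(1)] assms(2) by auto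
  have L3sq: "L3 * L3 = 1" using Legendre_pm1[OF assms, of 3] unfolding L3_def q_def by auto
  have c3: "[T * L3 = 2 * 2^n - 1] (mod q)"
  proof -
    have X1: "[L6 * L3 = 6^n * 3^n] (mod q)" by (rule cong_mult[OF e2(3) e2(2)])
    have X2: "(6::int)^n * 3^n = 2^n * (3^n * 3^n)"
      by (simp add: power_mult_distrib[symmetric] algebra_simps)
    have X3: "[2^n * (3^n * 3^n) = (2::int)^n * (L3 * L3)] (mod q)"
      by (rule cong_mult[OF cong_refl cong_mult[OF cong_sym[OF e2(2)] cong_sym[OF e2(2)]]])
    have "[L6 * L3 = 2^n * 1] (mod q)"
      by (rule cong_trans[OF X1[unfolded X2] X3[unfolded L3sq]])
    then have Y: "[L6 * L3 = 2^n] (mod q)" by simp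
    have TL: "T * L3 = 2 * (L6 * L3) - 1" unfolding T_def using L3sq by (simp add: algebra_simps)
    show ?thesis unfolding TL by (rule cong_diff[OF cong_mult[OF cong_refl Y] cong_refl])
  qed
  have c4: "[T * 18^K * 3^r = 2^K * (2 * 2^n - 1)] (mod q)"
  proof -
    have "(18::int)^K * 3^r = 2^K * 3^n"
    proof -
      have "(18::int)^K = 2^K * 9^K" by (simp add: power_mult_distrib[symmetric])
      moreover have "(3::int)^n = 9^K * 3^r" using Kn by (simp add: power_add power_mult)
      ultimately show ?thesis by simp
    qed
    then have eq1: "T * 18^K * 3^r = 2^K * (T * 3^n)" by (simp add: algebra_simps)
    show ?thesis unfolding eq1
      by (rule cong_trans[OF cong_mult[OF cong_refl cong_mult[OF cong_refl cong_sym[OF e2(2)]]] cong_mult[OF cong_refl c3]])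
  qed
  have c5: "[N * 3^r = T * 18^K * 3^r] (mod q)"
  proof -
    have "[N * 3^r = 2^K * (2 * 2^n - 1)] (mod q)"
      by (rule cong_trans[OF c1 cong_mult[OF cong_refl c2]])
    then show ?thesis by (rule cong_trans[OF _ cong_sym[OF c4]])
  qed
  have cop3: "coprime (3::int) q" unfolding q_def using coprime_prime_gt3[OF assms, of 3] by simp
  have cop2: "coprime (2::int) q" unfolding q_def using coprime_prime_gt3[OF assms, of 2] by simp
  have cop3r: "coprime ((3::int)^r) q" using cop3 by simp
  have c6: "[N = T * 18^K] (mod q)"
    using c5 cong_mult_rcancel[OF cop3r] by blast
  have cop18: "coprime ((18::int)^K) q"
  proof -
    have "coprime ((2::int)*(3*3)) q" using coprime_mult_left_iff cop2 cop3 by blast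
    then have "coprime (18::int) q" by simp
    then show ?thesis by simp
  qed
  have fin: "of_int N / 18^K - (of_int T::rat) = of_int (N - T*18^K) / of_int (18^K)"
    by (simp add: field_simps)
  have goal_eq: "(\<Sum>k=0..p div 4. of_nat ((4*k) choose (2*k)) / 18^k) - of_int (2 * Legendre 6 (int p) - Legendre 3 (int p))
      = (of_int N / 18^K - (of_int T::rat))"
    unfolding K_def T_def L6_def L3_def q_def using S_eq[unfolded K_def] by simp
  show ?thesis
    unfolding rat_cong_def
  proof (intro exI conjI)
    show "(18::int)^K \<noteq> 0" by simp
    show "coprime ((18::int)^K) (int p)" using cop18 q_def by simp
    show "int p dvd N - T * 18^K" using c6 unfolding q_def by (simp add: cong_iff_dvd_diff)
    show "(\<Sum>k=0..p div 4. of_nat ((4*k) choose (2*k)) / 18^k) - of_int (2 * Legendre 6 (int p) - Legendre 3 (int p))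
        = (of_int (N - T * 18^K) :: rat) / of_int (18^K)"
      using goal_eq fin by simp
  qed
qed

end
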